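(* Let $(\mathcal{A},\mathcal{E})$ be a finite, essentially small exact category and $X$ indecomposable. A chain $X_1\subsetneq_\mathcal{E}X_2\subsetneq_\mathcal{E}\cdots\subsetneq_\mathcal{E}X_n=X$ of indecomposable objects is an $\mathcal{E}$-Gabriel–Roiter filtration of $X$ if and only if it is a $\mu_\mathcal{E}$-filtration of $X$.
   Context: $(\mathcal{A},\mathcal{E})$ is a Quillen exact category; admissible monics are morphisms $i$ with $(i,d)\in\mathcal{E}$ for some $d$. $X\subsetneq_\mathcal{E}Y$ means there is an admissible monic $X\to Y$ that is not an isomorphism. A nonzero object $S$ is $\mathcal{E}$-simple if every object admitting an admissible monic into $S$ is zero or isomorphic to $S$. The $\mathcal{E}$-length $l_\mathcal{E}(X)$ is the supremum of all $n$ such that there is a chain $0=X_0\to\cdots\to X_n=X$ of admissible monics none of which is an isomorphism; $(\mathcal{A},\mathcal{E})$ is finite if $l_\mathcal{E}(X)<\infty$ for all $X$. $\mathfrak{S}(\mathbb{N})$ is the set of finite nonempty sequences of natural numbers, totally ordered by: $x\lll y$ iff $x=y$, or $x$ is a proper prefix of $y$, or at the first index $i$ where $x_i\neq y_i$ (both defined) one has $x_i>y_i$. For indecomposable $X$, $\mu_\mathcal{E}(X)$ is the $\lll$-maximum of $(l_\mathcal{E}(X_1),\dots,l_\mathcal{E}(X_n))$ over all chains $X_1\subsetneq_\mathcal{E}\cdots\subsetneq_\mathcal{E}X_n=X$ ($n\ge1$) with all $X_i$ indecomposable. A chain of indecomposables $X_1\subsetneq_\mathcal{E}\cdots\subsetneq_\mathcal{E}X_n=X$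 is a $\mu_\mathcal{E}$-filtration of $X$ if for all $i$, $\mu_\mathcal{E}(X_i)$ equals the prefix of length $i$ of $\mu_\mathcal{E}(X)$. For indecomposables $X,Y$, $X$ is an $\mathcal{E}$-Gabriel–Roiter predecessor of $Y$ if $X\subsetneq_\mathcal{E}Y$ and $\mu_\mathcal{E}(X)=\max\{\mu_\mathcal{E}(Y') : Y'\text{ indecomposable},\ Y'\subsetneq_\mathcal{E}Y\}$. A chain of indecomposables $X_1\subsetneq_\mathcal{E}\cdots\subsetneq_\mathcal{E}X_n=X$ is an $\mathcal{E}$-Gabriel–Roiter filtration of $X$ if $X_1$ is $\mathcal{E}$-simple and $X_{i-1}$ is an $\mathcal{E}$-Gabriel–Roiter predecessor of $X_i$ for all $2\le i\le n$. *)

theory Defs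
  imports Main "HOL-Library.Extended_Nat" "HOL-Library.Sublist"
begin

record ('o,'m) addcat =
  Obj   :: "'o set"
  Arr   :: "'m set"
  Dom   :: "'m \<Rightarrow> 'o"
  Cod   :: "'m \<Rightarrow> 'o"
  Comp  :: "'m \<Rightarrow> 'm \<Rightarrow> 'm"   (* Comp C g f = g after f *)
  Ident :: "'o \<Rightarrow> 'm"
  Add   :: "'m \<Rightarrow> 'm \<Rightarrow> 'm"
  Neg   :: "'m \<Rightarrow> 'm"
  Zer   :: "'o \<Rightarrow> 'o \<Rightarrow> 'm"   (* zero morphism A \<rightarrow> B *)

definition hom :: "('o,'m) addcat \<Rightarrow> 'o \<Rightarrow> 'o \<Rightarrow> 'm set" where
  "hom C A B = {f \<in> Arr C. Dom C f = A \<and> Cod C f = B}"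

definition is_category :: "('o,'m) addcat \<Rightarrow> bool" where
  "is_category C \<longleftrightarrow>
     (\<forall>f \<in> Arr C. Dom C f \<in> Obj C \<and> Cod C f \<in> Obj C) \<and>
     (\<forall>A \<in> Obj C. Ident C A \<in> hom C A A) \<and>
     (\<forall>f \<in> Arr C. \<forall>g \<in> Arr C. Cod C f = Dom C g \<longrightarrow>
          Comp C g f \<in> hom C (Dom C f) (Cod C g)) \<and>
     (\<forall>f \<in> Arr C. Comp C (Ident C (Cod C f)) f = f \<and> Comp C f (Ident C (Dom C f)) = f) \<and>
     (\<forall>f \<in> Arr C. \<forall>g \<in> Arr C. \<forall>h \<in> Arr C. Cod C f = Dom C g \<longrightarrow> Cod C g = Dom C h \<longrightarrow>
          Comp C h (Comp C g f) = Comp C (Comp C h g) f)"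

definition is_preadditive :: "('o,'m) addcat \<Rightarrow> bool" where
  "is_preadditive C \<longleftrightarrow> is_category C \<and>
     (\<forall>A \<in> Obj C. \<forall>B \<in> Obj C.
        Zer C A B \<in> hom C A B \<and>
        (\<forall>f \<in> hom C A B. \<forall>g \<in> hom C A B.
            Add C f g \<in> hom C A B \<and> Add C f g = Add C g f) \<and>
        (\<forall>f \<in> hom C A B. \<forall>g \<in> hom C A B. \<forall>h \<in> hom C A B.
            Add C (Add C f g) h = Add C f (Add C g h)) \<and>
        (\<forall>f \<in> hom C A B. Add C f (Zer C A B) = f \<and>
            Neg C f \<in> hom C A B \<and> Add C f (Neg C f) = Zer C A B)) \<and>
     (\<forall>A \<in> Obj C. \<forall>B \<in> Obj C. \<forall>D \<in> Obj C.
        \<forall>f \<in> hom C A B. \<forall>g \<in> hom C A B. \<forall>h \<in> hom C B D.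
          Comp C h (Add C f g) = Add C (Comp C h f) (Comp C h g)) \<and>
     (\<forall>A \<in> Obj C. \<forall>B \<in> Obj C. \<forall>D \<in> Obj C.
        \<forall>h \<in> hom C A B. \<forall>f \<in> hom C B D. \<forall>g \<in> hom C B D.
          Comp C (Add C f g) h = Add C (Comp C f h) (Comp C g h))"

definition is_zero_obj :: "('o,'m) addcat \<Rightarrow> 'o \<Rightarrow> bool" where
  "is_zero_obj C Z \<longleftrightarrow> Z \<in> Obj C \<and>
     (\<forall>A \<in> Obj C. (\<exists>!f. f \<in> hom C Z A) \<and> (\<exists>!f. f \<in> hom C A Z))"

definition is_biproduct ::
  "('o,'m) addcat \<Rightarrow> 'o \<Rightarrow> 'o \<Rightarrow> 'o \<Rightarrow> 'm \<Rightarrow> 'm \<Rightarrow> 'm \<Rightarrow> 'm \<Rightarrow> bool" where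
  "is_biproduct C A B S i1 i2 p1 p2 \<longleftrightarrow>
     A \<in> Obj C \<and> B \<in> Obj C \<and> S \<in> Obj C \<and>
     i1 \<in> hom C A S \<and> i2 \<in> hom C B S \<and> p1 \<in> hom C S A \<and> p2 \<in> hom C S B \<and>
     Comp C p1 i1 = Ident C A \<and> Comp C p2 i2 = Ident C B \<and>
     Comp C p2 i1 = Zer C A B \<and> Comp C p1 i2 = Zer C B A \<and>
     Add C (Comp C i1 p1) (Comp C i2 p2) = Ident C S"

definition is_additive :: "('o,'m) addcat \<Rightarrow> bool" where
  "is_additive C \<longleftrightarrow> is_preadditive C \<and> (\<exists>Z. is_zero_obj C Z) \<and>
     (\<forall>A \<in> Obj C. \<forall>B \<in> Obj C. \<exists>S i1 i2 p1 p2. is_biproduct C A B S i1 i2 p1 p2)"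

definition is_iso :: "('o,'m) addcat \<Rightarrow> 'm \<Rightarrow> bool" where
  "is_iso C f \<longleftrightarrow> f \<in> Arr C \<and>
     (\<exists>g \<in> hom C (Cod C f) (Dom C f).
        Comp C g f = Ident C (Dom C f) \<and> Comp C f g = Ident C (Cod C f))"

definition iso_objs :: "('o,'m) addcat \<Rightarrow> 'o \<Rightarrow> 'o \<Rightarrow> bool" where
  "iso_objs C A B \<longleftrightarrow> (\<exists>f \<in> hom C A B. is_iso C f)"

definition indecomposable :: "('o,'m) addcat \<Rightarrow> 'o \<Rightarrow> bool" where
  "indecomposable C X \<longleftrightarrow> X \<in> Obj C \<and> \<not> is_zero_obj C X \<and>
     (\<forall>A B i1 i2 p1 p2. is_biproduct C A B X i1 i2 p1 p2 \<longrightarrow>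
         is_zero_obj C A \<or> is_zero_obj C B)"

definition is_kernel :: "('o,'m) addcat \<Rightarrow> 'm \<Rightarrow> 'm \<Rightarrow> bool" where
  "is_kernel C i d \<longleftrightarrow> i \<in> Arr C \<and> d \<in> Arr C \<and> Cod C i = Dom C d \<and>
     Comp C d i = Zer C (Dom C i) (Cod C d) \<and>
     (\<forall>f \<in> Arr C. Cod C f = Dom C d \<longrightarrow> Comp C d f = Zer C (Dom C f) (Cod C d) \<longrightarrow>
        (\<exists>!h. h \<in> hom C (Dom C f) (Dom C i) \<and> Comp C i h = f))"

definition is_cokernel :: "('o,'m) addcat \<Rightarrow> 'm \<Rightarrow> 'm \<Rightarrow> bool" where
  "is_cokernel C d i \<longleftrightarrow> i \<in> Arr C \<and> d \<in> Arr C \<and> Cod C i = Dom C d \<and>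
     Comp C d i = Zer C (Dom C i) (Cod C d) \<and>
     (\<forall>f \<in> Arr C. Dom C f = Cod C i \<longrightarrow> Comp C f i = Zer C (Dom C i) (Cod C f) \<longrightarrow>
        (\<exists>!h. h \<in> hom C (Cod C d) (Cod C f) \<and> Comp C h d = f))"

definition kernel_cokernel_pair :: "('o,'m) addcat \<Rightarrow> 'm \<Rightarrow> 'm \<Rightarrow> bool" where
  "kernel_cokernel_pair C i d \<longleftrightarrow> is_kernel C i d \<and> is_cokernel C d i"

definition comm_square :: "('o,'m) addcat \<Rightarrow> 'm \<Rightarrow> 'm \<Rightarrow> 'm \<Rightarrow> 'm \<Rightarrow> bool" where
  "comm_square C f g f' g' \<longleftrightarrow> f \<in> Arr C \<and> g \<in> Arr C \<and> f' \<in> Arr C \<and> g' \<in> Arr C \<and>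
     Dom C f = Dom C g \<and> Cod C g = Dom C f' \<and> Cod C f = Dom C g' \<and> Cod C f' = Cod C g' \<and>
     Comp C g' f = Comp C f' g"

definition is_pushout :: "('o,'m) addcat \<Rightarrow> 'm \<Rightarrow> 'm \<Rightarrow> 'm \<Rightarrow> 'm \<Rightarrow> bool" where
  "is_pushout C f g f' g' \<longleftrightarrow> comm_square C f g f' g' \<and>
     (\<forall>u \<in> Arr C. \<forall>v \<in> Arr C. Dom C u = Cod C f \<longrightarrow> Dom C v = Cod C g \<longrightarrow>
        Cod C u = Cod C v \<longrightarrow> Comp C u f = Comp C v g \<longrightarrow>
        (\<exists>!h. h \<in> hom C (Cod C f') (Cod C u) \<and> Comp C h g' = u \<and> Comp C h f' = v))"

definition is_pullback :: "('o,'m) addcat \<Rightarrow> 'm \<Rightarrow> 'm \<Rightarrow> 'm \<Rightarrow> 'm \<Rightarrow> bool" where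
  "is_pullback C f g f' g' \<longleftrightarrow> comm_square C f g f' g' \<and>
     (\<forall>u \<in> Arr C. \<forall>v \<in> Arr C. Cod C u = Dom C g' \<longrightarrow> Cod C v = Dom C f' \<longrightarrow>
        Dom C u = Dom C v \<longrightarrow> Comp C g' u = Comp C f' v \<longrightarrow>
        (\<exists>!h. h \<in> hom C (Dom C u) (Dom C f) \<and> Comp C f h = u \<and> Comp C g h = v))"

definition adm_monic :: "('o,'m) addcat \<Rightarrow> ('m \<times> 'm) set \<Rightarrow> 'm \<Rightarrow> bool" where
  "adm_monic C E i \<longleftrightarrow> (\<exists>d. (i, d) \<in> E)"

definition adm_epic :: "('o,'m) addcat \<Rightarrow> ('m \<times> 'm) set \<Rightarrow> 'm \<Rightarrow> bool" where
  "adm_epic C E d \<longleftrightarrow> (\<exists>i. (i, d) \<in> E)"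

text \<open>Exact structure in the sense of Quillen (axioms as in Buehler, "Exact categories"):
  E is a class of kernel-cokernel pairs closed under isomorphisms of pairs, satisfying
  [E0], [E0op], [E1], [E1op], [E2], [E2op].\<close>
definition exact_category :: "('o,'m) addcat \<Rightarrow> ('m \<times> 'm) set \<Rightarrow> bool" where
  "exact_category C E \<longleftrightarrow> is_additive C \<and>
     (\<forall>(i, d) \<in> E. kernel_cokernel_pair C i d) \<and>
     (\<forall>i d i' d' a b c. (i, d) \<in> E \<longrightarrow> kernel_cokernel_pair C i' d' \<longrightarrow>
        is_iso C a \<longrightarrow> is_iso C b \<longrightarrow> is_iso C c \<longrightarrow>
        a \<in> hom C (Dom C i) (Dom C i') \<longrightarrow> b \<in> hom C (Cod C i) (Cod C i') \<longrightarrow>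
        c \<in> hom C (Cod C d) (Cod C d') \<longrightarrow>
        Comp C b i = Comp C i' a \<longrightarrow> Comp C c d = Comp C d' b \<longrightarrow> (i', d') \<in> E) \<and>
     (\<forall>A \<in> Obj C. adm_monic C E (Ident C A)) \<and>
     (\<forall>A \<in> Obj C. adm_epic C E (Ident C A)) \<and>
     (\<forall>i j. adm_monic C E i \<longrightarrow> adm_monic C E j \<longrightarrow> Cod C i = Dom C j \<longrightarrow>
        adm_monic C E (Comp C j i)) \<and>
     (\<forall>d e. adm_epic C E d \<longrightarrow> adm_epic C E e \<longrightarrow> Cod C d = Dom C e \<longrightarrow>
        adm_epic C E (Comp C e d)) \<and>
     (\<forall>i f. adm_monic C E i \<longrightarrow> f \<in> Arr C \<longrightarrow> Dom C f = Dom C i \<longrightarrow>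
        (\<exists>i' f'. is_pushout C i f i' f' \<and> adm_monic C E i')) \<and>
     (\<forall>d f. adm_epic C E d \<longrightarrow> f \<in> Arr C \<longrightarrow> Cod C f = Cod C d \<longrightarrow>
        (\<exists>d' f'. is_pullback C d' f' d f \<and> adm_epic C E d'))"

definition proper_sub :: "('o,'m) addcat \<Rightarrow> ('m \<times> 'm) set \<Rightarrow> 'o \<Rightarrow> 'o \<Rightarrow> bool" where
  "proper_sub C E X Y \<longleftrightarrow>
     (\<exists>i \<in> hom C X Y. adm_monic C E i \<and> \<not> is_iso C i)"

definition E_simple :: "('o,'m) addcat \<Rightarrow> ('m \<times> 'm) set \<Rightarrow> 'o \<Rightarrow> bool" where
  "E_simple C E S \<longleftrightarrow> S \<in> Obj C \<and> \<not> is_zero_obj C S \<and>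
     (\<forall>X \<in> Obj C. (\<exists>i \<in> hom C X S. adm_monic C E i) \<longrightarrow>
        is_zero_obj C X \<or> iso_objs C X S)"

definition E_length :: "('o,'m) addcat \<Rightarrow> ('m \<times> 'm) set \<Rightarrow> 'o \<Rightarrow> enat" where
  "E_length C E X = Sup {enat n | n. \<exists>Xs :: nat \<Rightarrow> 'o.
      is_zero_obj C (Xs 0) \<and> Xs n = X \<and>
      (\<forall>k < n. proper_sub C E (Xs k) (Xs (Suc k)))}"

definition finite_exact :: "('o,'m) addcat \<Rightarrow> ('m \<times> 'm) set \<Rightarrow> bool" where
  "finite_exact C E \<longleftrightarrow> (\<forall>X \<in> Obj C. E_length C E X < \<infinity>)"

definition seq_le :: "nat list \<Rightarrow> nat list \<Rightarrow> bool" where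
  "seq_le x y \<longleftrightarrow> x = y \<or> strict_prefix x y \<or>
     (\<exists>i. i < length x \<and> i < length y \<and> take i x = take i y \<and> x ! i > y ! i)"

definition seq_max :: "nat list set \<Rightarrow> nat list" where
  "seq_max S = (THE m. m \<in> S \<and> (\<forall>s \<in> S. seq_le s m))"

definition indec_chain :: "('o,'m) addcat \<Rightarrow> ('m \<times> 'm) set \<Rightarrow> 'o list \<Rightarrow> 'o \<Rightarrow> bool" where
  "indec_chain C E xs X \<longleftrightarrow> xs \<noteq> [] \<and> last xs = X \<and>
     (\<forall>x \<in> set xs. indecomposable C x) \<and>
     (\<forall>k. Suc k < length xs \<longrightarrow> proper_sub C E (xs ! k) (xs ! Suc k))"

definition mu_E :: "('o,'m) addcat \<Rightarrow> ('m \<times> 'm) set \<Rightarrow> 'o \<Rightarrow> nat list" where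
  "mu_E C E X = seq_max {map (\<lambda>Y. the_enat (E_length C E Y)) xs | xs. indec_chain C E xs X}"

definition mu_filtration :: "('o,'m) addcat \<Rightarrow> ('m \<times> 'm) set \<Rightarrow> 'o list \<Rightarrow> 'o \<Rightarrow> bool" where
  "mu_filtration C E xs X \<longleftrightarrow> indec_chain C E xs X \<and>
     (\<forall>i < length xs. mu_E C E (xs ! i) = take (Suc i) (mu_E C E X))"

definition GR_predecessor :: "('o,'m) addcat \<Rightarrow> ('m \<times> 'm) set \<Rightarrow> 'o \<Rightarrow> 'o \<Rightarrow> bool" where
  "GR_predecessor C E X Y \<longleftrightarrow> indecomposable C X \<and> indecomposable C Y \<and> proper_sub C E X Y \<and>
     mu_E C E X = seq_max {mu_E C E Y' | Y'. indecomposable C Y' \<and> proper_sub C E Y' Y}"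

definition GR_filtration :: "('o,'m) addcat \<Rightarrow> ('m \<times> 'm) set \<Rightarrow> 'o list \<Rightarrow> 'o \<Rightarrow> bool" where
  "GR_filtration C E xs X \<longleftrightarrow> indec_chain C E xs X \<and> E_simple C E (xs ! 0) \<and>
     (\<forall>i. 1 \<le> i \<longrightarrow> i < length xs \<longrightarrow> GR_predecessor C E (xs ! (i - 1)) (xs ! i))"

end

theory Submission
  imports Defs
begin


definition Rg :: "(nat \<times> nat) set" where "Rg = {(a,b). b < a}"

lemma strict_prefix_conv: "strict_prefix x y \<longleftrightarrow> length x < length y \<and> take (length x) y = x"
proof
  assume "strict_prefix x y"
  then obtain zs where "y = x @ zs" "zs \<noteq> []" unfolding strict_prefix_def prefix_def by auto
  then show "length x < length y \<and> take (length x) y = x" by simp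
next
  assume a: "length x < length y \<and> take (length x) y = x"
  then have "y = x @ drop (length x) y" by (metis append_take_drop_id)
  moreover have "x \<noteq> y" using a by auto
  ultimately show "strict_prefix x y" unfolding strict_prefix_def prefix_def by blast
qed

lemma seq_le_lexord: "seq_le x y \<longleftrightarrow> x = y \<or> (x,y) \<in> lexord Rg"
  unfolding seq_le_def lexord_take_index_conv strict_prefix_conv Rg_def by auto

lemma seq_le_refl: "seq_le x x" by (simp add: seq_le_def)

lemma trans_Rg: "trans Rg" unfolding Rg_def trans_def by auto

lemma seq_le_trans: "seq_le x y \<Longrightarrow> seq_le y z \<Longrightarrow> seq_le x z"
  unfolding seq_le_lexord using lexord_trans[OF _ _ trans_Rg] by blast

lemma seq_le_antisym: "seq_le x y \<Longrightarrow> seq_le y x \<Longrightarrow> x = y"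
proof -
  have "asym Rg" unfolding Rg_def by (auto intro: asymI)
  then show "seq_le x y \<Longrightarrow> seq_le y x \<Longrightarrow> x = y"
    unfolding seq_le_lexord using lexord_asymmetric by blast
qed

lemma seq_le_total: "seq_le x y \<or> seq_le y x"
proof -
  have "\<forall>a b. (a,b) \<in> Rg \<or> a = b \<or> (b,a) \<in> Rg" unfolding Rg_def by auto
  from lexord_linear[of Rg x y, OF this] show ?thesis unfolding seq_le_lexord by blast
qed

lemma seq_max_exists: "finite S \<Longrightarrow> S \<noteq> {} \<Longrightarrow> \<exists>m\<in>S. \<forall>s\<in>S. seq_le s m"
proof (induction S rule: finite_ne_induct)
  case (singleton x) then show ?case by (simp add: seq_le_refl)
next
  case (insert x F)
  then obtain m where m: "m \<in> F" "\<forall>s\<in>F. seq_le s m" by blast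
  show ?case
  proof (cases "seq_le x m")
    case True then show ?thesis using m by auto
  next
    case False then have "seq_le m x" using seq_le_total by blast
    then show ?thesis using m seq_le_refl seq_le_trans by blast
  qed
qed

lemma seq_max_eq: "m \<in> S \<Longrightarrow> \<forall>s\<in>S. seq_le s m \<Longrightarrow> seq_max S = m"
  unfolding seq_max_def by (rule the_equality) (auto intro: seq_le_antisym)

lemma seq_max_prop: "finite S \<Longrightarrow> S \<noteq> {} \<Longrightarrow> seq_max S \<in> S \<and> (\<forall>s\<in>S. seq_le s (seq_max S))"
  using seq_max_exists seq_max_eq by metis

lemma seq_le_snoc:
  assumes "seq_le a b" "\<forall>x\<in>set b. x < N"
  shows "seq_le (a @ [N]) (b @ [N])"
proof -
  consider "a = b" | "strict_prefix a b" | i where "i < length a" "i < length b" "take i a = take i b" "a ! i > b ! i"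
    using assms(1) unfolding seq_le_def by blast
  then show ?thesis
  proof cases
    case 1 then show ?thesis by (simp add: seq_le_refl)
  next
    case 2
    then obtain c v where bv: "b = a @ c # v" 
      by (metis append_Cons neq_Nil_conv prefix_def strict_prefix_def self_append_conv)
    have "c < N" using assms(2) bv by auto
    show ?thesis unfolding seq_le_def
      apply (rule disjI2, rule disjI2)
      apply (rule exI[of _ "length a"])
      using bv \<open>c < N\<close> by (auto simp: nth_append)
  next
    case 3
    show ?thesis unfolding seq_le_def
      apply (rule disjI2, rule disjI2)
      apply (rule exI[of _ i])
      using 3 by (auto simp: nth_append)
  qed
qed

lemma seq_le_single: "b \<noteq> [] \<Longrightarrow> \<forall>x\<in>set b. x < N \<Longrightarrow> seq_le [N] (b @ [N])"
  unfolding seq_le_def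
  apply (rule disjI2, rule disjI2, rule exI[of _ 0])
  by (cases b) auto



locale ec =
  fixes C :: "('o,'m) addcat" and E :: "('m \<times> 'm) set"
  assumes exact: "exact_category C E"
begin

lemma additive: "is_additive C" using exact unfolding exact_category_def by blast
lemma pre: "is_preadditive C" using additive unfolding is_additive_def by blast
lemma cat: "is_category C" using pre unfolding is_preadditive_def by blast

lemma homD: "f \<in> hom C A B \<Longrightarrow> f \<in> Arr C \<and> Dom C f = A \<and> Cod C f = B"
  by (simp add: hom_def)
lemma homI: "f \<in> Arr C \<Longrightarrow> Dom C f = A \<Longrightarrow> Cod C f = B \<Longrightarrow> f \<in> hom C A B"
  by (simp add: hom_def)
lemma arr_hom: "f \<in> Arr C \<Longrightarrow> f \<in> hom C (Dom C f) (Cod C f)"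
  by (simp add: hom_def)
lemma arr_objs: "f \<in> Arr C \<Longrightarrow> Dom C f \<in> Obj C \<and> Cod C f \<in> Obj C"
  using cat unfolding is_category_def by blast
lemma hom_objs: "f \<in> hom C A B \<Longrightarrow> A \<in> Obj C \<and> B \<in> Obj C"
  using arr_objs[of f] homD[of f A B] by auto
lemma id_hom: "A \<in> Obj C \<Longrightarrow> Ident C A \<in> hom C A A"
  using cat unfolding is_category_def by blast
lemma comp_hom: "f \<in> hom C A B \<Longrightarrow> g \<in> hom C B D \<Longrightarrow> Comp C g f \<in> hom C A D"
proof -
  assume f: "f \<in> hom C A B" and g: "g \<in> hom C B D"
  have "\<forall>f \<in> Arr C. \<forall>g \<in> Arr C. Cod C f = Dom C g \<longrightarrow>
          Comp C g f \<in> hom C (Dom C f) (Cod C g)" using cat unfolding is_category_def by blast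
  then show ?thesis using homD[OF f] homD[OF g] by auto
qed
lemma cat_id: "\<forall>f \<in> Arr C. Comp C (Ident C (Cod C f)) f = f \<and> Comp C f (Ident C (Dom C f)) = f"
  using cat unfolding is_category_def by (elim conjE)
lemma id_l: "f \<in> hom C A B \<Longrightarrow> Comp C (Ident C B) f = f"
  using cat_id homD[of f A B] by auto
lemma id_r: "f \<in> hom C A B \<Longrightarrow> Comp C f (Ident C A) = f"
  using cat_id homD[of f A B] by auto
lemma assoc: "f \<in> hom C A B \<Longrightarrow> g \<in> hom C B D \<Longrightarrow> h \<in> hom C D F \<Longrightarrow>
    Comp C h (Comp C g f) = Comp C (Comp C h g) f"
proof -
  assume f: "f \<in> hom C A B" and g: "g \<in> hom C B D" and h: "h \<in> hom C D F"
  have "\<forall>f \<in> Arr C. \<forall>g \<in> Arr C. \<forall>h \<in> Arr C. Cod C f = Dom C g \<longrightarrow> Cod C g = Dom C h \<longrightarrow>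
          Comp C h (Comp C g f) = Comp C (Comp C h g) f" using cat unfolding is_category_def by blast
  then show ?thesis using homD[OF f] homD[OF g] homD[OF h] by auto
qed

lemma pre_obj: "\<forall>A \<in> Obj C. \<forall>B \<in> Obj C.
        Zer C A B \<in> hom C A B \<and>
        (\<forall>f \<in> hom C A B. \<forall>g \<in> hom C A B.
            Add C f g \<in> hom C A B \<and> Add C f g = Add C g f) \<and>
        (\<forall>f \<in> hom C A B. \<forall>g \<in> hom C A B. \<forall>h \<in> hom C A B.
            Add C (Add C f g) h = Add C f (Add C g h)) \<and>
        (\<forall>f \<in> hom C A B. Add C f (Zer C A B) = f \<and>
            Neg C f \<in> hom C A B \<and> Add C f (Neg C f) = Zer C A B)"
  using pre unfolding is_preadditive_def by (elim conjE)
lemma pre_dl: "\<forall>A \<in> Obj C. \<forall>B \<in> Obj C. \<forall>D \<in> Obj C.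
        \<forall>f \<in> hom C A B. \<forall>g \<in> hom C A B. \<forall>h \<in> hom C B D.
          Comp C h (Add C f g) = Add C (Comp C h f) (Comp C h g)"
  using pre unfolding is_preadditive_def by (elim conjE)
lemma pre_dr: "\<forall>A \<in> Obj C. \<forall>B \<in> Obj C. \<forall>D \<in> Obj C.
        \<forall>h \<in> hom C A B. \<forall>f \<in> hom C B D. \<forall>g \<in> hom C B D.
          Comp C (Add C f g) h = Add C (Comp C f h) (Comp C g h)"
  using pre unfolding is_preadditive_def by (elim conjE)

lemma pre_obj': "A \<in> Obj C \<Longrightarrow> B \<in> Obj C \<Longrightarrow> Zer C A B \<in> hom C A B \<and>
        (\<forall>f \<in> hom C A B. \<forall>g \<in> hom C A B.
            Add C f g \<in> hom C A B \<and> Add C f g = Add C g f) \<and>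
        (\<forall>f \<in> hom C A B. \<forall>g \<in> hom C A B. \<forall>h \<in> hom C A B.
            Add C (Add C f g) h = Add C f (Add C g h)) \<and>
        (\<forall>f \<in> hom C A B. Add C f (Zer C A B) = f \<and>
            Neg C f \<in> hom C A B \<and> Add C f (Neg C f) = Zer C A B)"
  using pre_obj by blast

lemma zer_hom: "A \<in> Obj C \<Longrightarrow> B \<in> Obj C \<Longrightarrow> Zer C A B \<in> hom C A B"
  using pre_obj' by blast
lemma add_hom: "f \<in> hom C A B \<Longrightarrow> g \<in> hom C A B \<Longrightarrow> Add C f g \<in> hom C A B"
  using pre_obj'[of A B] hom_objs[of f A B] by blast
lemma add_comm: "f \<in> hom C A B \<Longrightarrow> g \<in> hom C A B \<Longrightarrow> Add C f g = Add C g f"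
  using pre_obj'[of A B] hom_objs[of f A B] by blast
lemma add_assoc: "f \<in> hom C A B \<Longrightarrow> g \<in> hom C A B \<Longrightarrow> h \<in> hom C A B \<Longrightarrow>
   Add C (Add C f g) h = Add C f (Add C g h)"
  using pre_obj'[of A B] hom_objs[of f A B] by blast
lemma add_zer: "f \<in> hom C A B \<Longrightarrow> Add C f (Zer C A B) = f"
  using pre_obj'[of A B] hom_objs[of f A B] by blast
lemma zer_add: "f \<in> hom C A B \<Longrightarrow> Add C (Zer C A B) f = f"
  using add_zer[of f A B] add_comm[of f A B "Zer C A B"] zer_hom[of A B] hom_objs[of f A B] by simp
lemma neg_hom: "f \<in> hom C A B \<Longrightarrow> Neg C f \<in> hom C A B"
  using pre_obj'[of A B] hom_objs[of f A B] by blast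
lemma add_neg: "f \<in> hom C A B \<Longrightarrow> Add C f (Neg C f) = Zer C A B"
  using pre_obj'[of A B] hom_objs[of f A B] by blast
lemma distl: "f \<in> hom C A B \<Longrightarrow> g \<in> hom C A B \<Longrightarrow> h \<in> hom C B D \<Longrightarrow>
   Comp C h (Add C f g) = Add C (Comp C h f) (Comp C h g)"
  using pre_dl hom_objs[of f A B] hom_objs[of h B D] by blast
lemma distr: "h \<in> hom C A B \<Longrightarrow> f \<in> hom C B D \<Longrightarrow> g \<in> hom C B D \<Longrightarrow>
   Comp C (Add C f g) h = Add C (Comp C f h) (Comp C g h)"
  using pre_dr hom_objs[of h A B] hom_objs[of f B D] by blast

lemma idem_zero: assumes z: "z \<in> hom C A B" and e: "Add C z z = z" shows "z = Zer C A B"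
proof -
  have "Zer C A B = Add C z (Neg C z)" using add_neg z by simp
  also have "\<dots> = Add C (Add C z z) (Neg C z)" using e by simp
  also have "\<dots> = Add C z (Add C z (Neg C z))" using add_assoc z neg_hom by blast
  also have "\<dots> = z" using add_neg add_zer z by simp
  finally show ?thesis by simp
qed

lemma zer_comp: assumes f: "f \<in> hom C A B" and D: "D \<in> Obj C"
  shows "Comp C (Zer C B D) f = Zer C A D"
proof -
  have B: "B \<in> Obj C" using hom_objs f by blast
  have zh: "Zer C B D \<in> hom C B D" using zer_hom B D by blast
  have h: "Comp C (Zer C B D) f \<in> hom C A D" using comp_hom f zh by blast
  have "Comp C (Zer C B D) f = Comp C (Add C (Zer C B D) (Zer C B D)) f"
    using add_zer zh by simp
  also have "\<dots> = Add C (Comp C (Zer C B D) f) (Comp C (Zer C B D) f)"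
    using distr f zh by blast
  finally show ?thesis using idem_zero[OF h] by simp
qed

lemma comp_zer: assumes f: "f \<in> hom C B D" and A: "A \<in> Obj C"
  shows "Comp C f (Zer C A B) = Zer C A D"
proof -
  have B: "B \<in> Obj C" using hom_objs f by blast
  have zh: "Zer C A B \<in> hom C A B" using zer_hom B A by blast
  have h: "Comp C f (Zer C A B) \<in> hom C A D" using comp_hom f zh by blast
  have "Comp C f (Zer C A B) = Comp C f (Add C (Zer C A B) (Zer C A B))"
    using add_zer zh by simp
  also have "\<dots> = Add C (Comp C f (Zer C A B)) (Comp C f (Zer C A B))"
    using distl f zh by blast
  finally show ?thesis using idem_zero[OF h] by simp
qed

lemma zero_obj_Obj: "is_zero_obj C Z \<Longrightarrow> Z \<in> Obj C"
  by (simp add: is_zero_obj_def)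
lemma zero_from_unique: "is_zero_obj C Z \<Longrightarrow> f \<in> hom C Z A \<Longrightarrow> g \<in> hom C Z A \<Longrightarrow> f = g"
  unfolding is_zero_obj_def using hom_objs[of f Z A] by blast
lemma zero_to_unique: "is_zero_obj C Z \<Longrightarrow> f \<in> hom C A Z \<Longrightarrow> g \<in> hom C A Z \<Longrightarrow> f = g"
  unfolding is_zero_obj_def using hom_objs[of f A Z] by blast
lemma zero_from_zer: "is_zero_obj C Z \<Longrightarrow> f \<in> hom C Z A \<Longrightarrow> f = Zer C Z A"
  using zero_from_unique[of Z f A "Zer C Z A"] zer_hom[of Z A] hom_objs[of f Z A] by blast
lemma zero_id_zer: "is_zero_obj C Z \<Longrightarrow> Ident C Z = Zer C Z Z"
  using zero_from_zer[of Z "Ident C Z" Z] id_hom[of Z] zero_obj_Obj[of Z] by blast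
lemma id_zer_zero: assumes A: "A \<in> Obj C" and e: "Ident C A = Zer C A A"
  shows "is_zero_obj C A"
  unfolding is_zero_obj_def
proof (intro conjI ballI)
  show "A \<in> Obj C" by fact
  fix B assume B: "B \<in> Obj C"
  show "\<exists>!f. f \<in> hom C A B"
  proof (rule ex1I[of _ "Zer C A B"])
    show "Zer C A B \<in> hom C A B" using zer_hom A B by blast
    fix g assume g: "g \<in> hom C A B"
    have "g = Comp C g (Ident C A)" using id_r g by simp
    also have "\<dots> = Zer C A B" using e comp_zer g A by simp
    finally show "g = Zer C A B" .
  qed
  show "\<exists>!f. f \<in> hom C B A"
  proof (rule ex1I[of _ "Zer C B A"])
    show "Zer C B A \<in> hom C B A" using zer_hom A B by blast
    fix g assume g: "g \<in> hom C B A"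
    have "g = Comp C (Ident C A) g" using id_l g by simp
    also have "\<dots> = Zer C B A" using e zer_comp g A by simp
    finally show "g = Zer C B A" .
  qed
qed

lemma iso_homE: assumes "is_iso C f" "f \<in> hom C A B"
  obtains g where "g \<in> hom C B A" "Comp C g f = Ident C A" "Comp C f g = Ident C B"
  using assms unfolding is_iso_def hom_def by auto
lemma iso_intro: "f \<in> hom C A B \<Longrightarrow> g \<in> hom C B A \<Longrightarrow> Comp C g f = Ident C A \<Longrightarrow>
    Comp C f g = Ident C B \<Longrightarrow> is_iso C f"
  unfolding is_iso_def hom_def by auto
lemma id_iso: "A \<in> Obj C \<Longrightarrow> is_iso C (Ident C A)"
  using iso_intro[of "Ident C A" A A "Ident C A"] id_hom[of A] id_l[of "Ident C A" A A] by blast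

lemma comp_not_iso:
  assumes g: "g \<in> hom C B B'" "is_iso C g" and j: "j \<in> hom C A B" and nj: "\<not> is_iso C j"
  shows "\<not> is_iso C (Comp C g j)"
proof
  assume i: "is_iso C (Comp C g j)"
  have gj: "Comp C g j \<in> hom C A B'" using comp_hom g j by blast
  obtain h where h: "h \<in> hom C B' A" "Comp C h (Comp C g j) = Ident C A" "Comp C (Comp C g j) h = Ident C B'"
    using iso_homE[OF i gj] by blast
  obtain g' where g': "g' \<in> hom C B' B" "Comp C g' g = Ident C B" "Comp C g g' = Ident C B'"
    using iso_homE[OF g(2) g(1)] by blast
  have hg: "Comp C h g \<in> hom C B A" using comp_hom h g by blast
  have 1: "Comp C (Comp C h g) j = Ident C A" using h assoc[OF j g(1) h(1)] by simp
  have "Comp C j (Comp C h g) = Comp C (Comp C g' g) (Comp C j (Comp C h g))"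
    using g' id_l comp_hom[OF hg j] by simp
  also have "\<dots> = Comp C g' (Comp C g (Comp C j (Comp C h g)))"
    using assoc[OF comp_hom[OF hg j] g(1) g'(1)] by simp
  also have "Comp C g (Comp C j (Comp C h g)) = Comp C (Comp C g j) (Comp C h g)"
    using assoc[OF hg j g(1)] by simp
  also have "\<dots> = Comp C (Comp C (Comp C g j) h) g"
    using assoc[OF g(1) h(1) gj] by simp
  also have "\<dots> = g" using h id_l g by simp
  finally have 2: "Comp C j (Comp C h g) = Ident C B" using g' by simp
  show False using nj iso_intro[OF j hg 1 2] by simp
qed

end


context ec begin

lemma E_kc: "(i,d) \<in> E \<Longrightarrow> kernel_cokernel_pair C i d"
  using exact unfolding exact_category_def by blast
lemma E_closed: "(i, d) \<in> E \<Longrightarrow> kernel_cokernel_pair C i' d' \<Longrightarrow>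
        is_iso C a \<Longrightarrow> is_iso C b \<Longrightarrow> is_iso C c \<Longrightarrow>
        a \<in> hom C (Dom C i) (Dom C i') \<Longrightarrow> b \<in> hom C (Cod C i) (Cod C i') \<Longrightarrow>
        c \<in> hom C (Cod C d) (Cod C d') \<Longrightarrow>
        Comp C b i = Comp C i' a \<Longrightarrow> Comp C c d = Comp C d' b \<Longrightarrow> (i', d') \<in> E"
proof -
  have "\<forall>i d i' d' a b c. (i, d) \<in> E \<longrightarrow> kernel_cokernel_pair C i' d' \<longrightarrow>
        is_iso C a \<longrightarrow> is_iso C b \<longrightarrow> is_iso C c \<longrightarrow>
        a \<in> hom C (Dom C i) (Dom C i') \<longrightarrow> b \<in> hom C (Cod C i) (Cod C i') \<longrightarrow>
        c \<in> hom C (Cod C d) (Cod C d') \<longrightarrow>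
        Comp C b i = Comp C i' a \<longrightarrow> Comp C c d = Comp C d' b \<longrightarrow> (i', d') \<in> E"
    using exact unfolding exact_category_def by (elim conjE)
  then show "(i, d) \<in> E \<Longrightarrow> kernel_cokernel_pair C i' d' \<Longrightarrow>
        is_iso C a \<Longrightarrow> is_iso C b \<Longrightarrow> is_iso C c \<Longrightarrow>
        a \<in> hom C (Dom C i) (Dom C i') \<Longrightarrow> b \<in> hom C (Cod C i) (Cod C i') \<Longrightarrow>
        c \<in> hom C (Cod C d) (Cod C d') \<Longrightarrow>
        Comp C b i = Comp C i' a \<Longrightarrow> Comp C c d = Comp C d' b \<Longrightarrow> (i', d') \<in> E"
    by blast
qed
lemma E0: "A \<in> Obj C \<Longrightarrow> adm_monic C E (Ident C A)"
  using exact unfolding exact_category_def by blast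
lemma E0op: "A \<in> Obj C \<Longrightarrow> adm_epic C E (Ident C A)"
  using exact unfolding exact_category_def by blast
lemma E1: "adm_monic C E i \<Longrightarrow> adm_monic C E j \<Longrightarrow> Cod C i = Dom C j \<Longrightarrow>
        adm_monic C E (Comp C j i)"
proof -
  have "\<forall>i j. adm_monic C E i \<longrightarrow> adm_monic C E j \<longrightarrow> Cod C i = Dom C j \<longrightarrow>
        adm_monic C E (Comp C j i)" using exact unfolding exact_category_def by (elim conjE)
  then show "adm_monic C E i \<Longrightarrow> adm_monic C E j \<Longrightarrow> Cod C i = Dom C j \<Longrightarrow>
        adm_monic C E (Comp C j i)" by blast
qed
lemma E2: "adm_monic C E i \<Longrightarrow> f \<in> Arr C \<Longrightarrow> Dom C f = Dom C i \<Longrightarrow>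
        (\<exists>i' f'. is_pushout C i f i' f' \<and> adm_monic C E i')"
proof -
  have "\<forall>i f. adm_monic C E i \<longrightarrow> f \<in> Arr C \<longrightarrow> Dom C f = Dom C i \<longrightarrow>
        (\<exists>i' f'. is_pushout C i f i' f' \<and> adm_monic C E i')"
    using exact unfolding exact_category_def by (elim conjE)
  then show "adm_monic C E i \<Longrightarrow> f \<in> Arr C \<Longrightarrow> Dom C f = Dom C i \<Longrightarrow>
        (\<exists>i' f'. is_pushout C i f i' f' \<and> adm_monic C E i')" by blast
qed

lemma iso_adm_monic:
  assumes f: "f \<in> hom C Y S" and fi: "is_iso C f"
  shows "adm_monic C E f"
proof -
  obtain g where g: "g \<in> hom C S Y" "Comp C g f = Ident C Y" "Comp C f g = Ident C S"
    using iso_homE[OF fi f] by blast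
  have S: "S \<in> Obj C" and Y: "Y \<in> Obj C" using hom_objs f by auto
  have idS: "Ident C S \<in> hom C S S" using id_hom S by blast
  obtain d where dE: "(Ident C S, d) \<in> E" using E0[OF S] unfolding adm_monic_def by blast
  have kc: "is_kernel C (Ident C S) d" "is_cokernel C d (Ident C S)"
    using E_kc[OF dE] unfolding kernel_cokernel_pair_def by auto
  define Q where "Q = Cod C d"
  have dA: "d \<in> Arr C" and dD: "Dom C d = S" and dz: "Comp C d (Ident C S) = Zer C S Q"
    using kc(1) homD[OF idS] unfolding is_kernel_def Q_def by auto
  have dh: "d \<in> hom C S Q" using dA dD Q_def homI by auto
  have Q: "Q \<in> Obj C" using hom_objs dh by blast
  have dZ: "d = Zer C S Q" using dz id_r[OF dh] by simp
  have df: "Comp C d f = Zer C Y Q" using dZ zer_comp[OF f Q] by simp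
  have fA: "f \<in> Arr C" and fD: "Dom C f = Y" and fC: "Cod C f = S" using homD[OF f] by auto
  have ker: "is_kernel C f d"
    unfolding is_kernel_def
  proof (intro conjI ballI impI)
    show "f \<in> Arr C" "d \<in> Arr C" "Cod C f = Dom C d" using fA dA fC dD by auto
    show "Comp C d f = Zer C (Dom C f) (Cod C d)" using df fD Q_def by simp
    fix h assume hA: "h \<in> Arr C" and hC: "Cod C h = Dom C d"
    have h: "h \<in> hom C (Dom C h) S" using hA hC dD homI by auto
    show "\<exists>!k. k \<in> hom C (Dom C h) (Dom C f) \<and> Comp C f k = h"
    proof (rule ex1I[of _ "Comp C g h"])
      have gh: "Comp C g h \<in> hom C (Dom C h) Y" using comp_hom h g(1) by blast
      have "Comp C f (Comp C g h) = Comp C (Comp C f g) h" using assoc[OF h g(1) f] by simp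
      also have "\<dots> = h" using g(3) id_l[OF h] by simp
      finally show "Comp C g h \<in> hom C (Dom C h) (Dom C f) \<and> Comp C f (Comp C g h) = h"
        using gh fD by simp
      fix k assume k: "k \<in> hom C (Dom C h) (Dom C f) \<and> Comp C f k = h"
      then have kh: "k \<in> hom C (Dom C h) Y" using fD by simp
      have "k = Comp C (Comp C g f) k" using g(2) id_l[OF kh] by simp
      also have "\<dots> = Comp C g (Comp C f k)" using assoc[OF kh f g(1)] by simp
      finally show "k = Comp C g h" using k by simp
    qed
  qed
  have cok: "is_cokernel C d f"
    unfolding is_cokernel_def
  proof (intro conjI ballI impI)
    show "f \<in> Arr C" "d \<in> Arr C" "Cod C f = Dom C d" using fA dA fC dD by auto
    show "Comp C d f = Zer C (Dom C f) (Cod C d)" using df fD Q_def by simp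
    fix h assume hA: "h \<in> Arr C" and hD: "Dom C h = Cod C f" and hz: "Comp C h f = Zer C (Dom C f) (Cod C h)"
    have h: "h \<in> hom C S (Cod C h)" using hA hD fC homI by auto
    have W: "Cod C h \<in> Obj C" using hom_objs h by blast
    have "Comp C h (Ident C S) = h" using id_r h by blast
    also have "\<dots> = Comp C h (Comp C f g)" using g(3) id_r[OF h] by simp
    also have "\<dots> = Comp C (Comp C h f) g" using assoc[OF g(1) f h] by simp
    also have "\<dots> = Zer C S (Cod C h)" using hz fD zer_comp[OF g(1) W] by simp
    finally have hz': "Comp C h (Ident C S) = Zer C (Dom C (Ident C S)) (Cod C h)"
      using homD[OF idS] by simp
    have "\<forall>h \<in> Arr C. Dom C h = Cod C (Ident C S) \<longrightarrow> Comp C h (Ident C S) = Zer C (Dom C (Ident C S)) (Cod C h) \<longrightarrow>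
        (\<exists>!k. k \<in> hom C (Cod C d) (Cod C h) \<and> Comp C k d = h)"
      using kc(2) unfolding is_cokernel_def by blast
    then show "\<exists>!k. k \<in> hom C (Cod C d) (Cod C h) \<and> Comp C k d = h"
      using hA hD fC homD[OF idS] hz' by auto
  qed
  have "(f, d) \<in> E"
  proof (rule E_closed[OF dE _ _ id_iso[OF S] id_iso[OF Q]])
    show "kernel_cokernel_pair C f d" using ker cok unfolding kernel_cokernel_pair_def by simp
    show "is_iso C g" using iso_intro[OF g(1) f g(3) g(2)] .
    show "g \<in> hom C (Dom C (Ident C S)) (Dom C f)" using g(1) homD[OF idS] fD by simp
    show "Ident C S \<in> hom C (Cod C (Ident C S)) (Cod C f)" using idS homD[OF idS] fC by simp
    show "Ident C Q \<in> hom C (Cod C d) (Cod C d)" using id_hom Q Q_def by simp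
    show "Comp C (Ident C S) (Ident C S) = Comp C f g" using g(3) id_l[OF idS] by simp
    show "Comp C (Ident C Q) d = Comp C d (Ident C S)" using id_l[OF dh] id_r[OF dh] by simp
  qed
  then show ?thesis unfolding adm_monic_def by blast
qed

lemma zero_mono:
  assumes A: "A \<in> Obj C"
  shows "\<exists>K i. is_zero_obj C K \<and> i \<in> hom C K A \<and> adm_monic C E i"
proof -
  obtain i where iE: "(i, Ident C A) \<in> E" using E0op[OF A] unfolding adm_epic_def by blast
  have k: "is_kernel C i (Ident C A)" using E_kc[OF iE] unfolding kernel_cokernel_pair_def by simp
  have idA: "Ident C A \<in> hom C A A" using id_hom A by blast
  define K where "K = Dom C i"
  have iA: "i \<in> Arr C" and iC: "Cod C i = A" and iz: "Comp C (Ident C A) i = Zer C K A"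
    using k homD[OF idA] unfolding is_kernel_def K_def by auto
  have ih: "i \<in> hom C K A" using iA iC K_def homI by auto
  have K: "K \<in> Obj C" using hom_objs ih by blast
  have iZ: "i = Zer C K A" using iz id_l[OF ih] by simp
  have "\<forall>f \<in> Arr C. Cod C f = Dom C (Ident C A) \<longrightarrow> Comp C (Ident C A) f = Zer C (Dom C f) (Cod C (Ident C A)) \<longrightarrow>
        (\<exists>!h. h \<in> hom C (Dom C f) (Dom C i) \<and> Comp C i h = f)"
    using k unfolding is_kernel_def by blast
  then have u: "\<exists>!h. h \<in> hom C K K \<and> Comp C i h = i"
    using iA iC homD[OF idA] iz K_def by auto
  have 1: "Ident C K \<in> hom C K K \<and> Comp C i (Ident C K) = i" using id_hom K id_r ih by blast
  have 2: "Zer C K K \<in> hom C K K \<and> Comp C i (Zer C K K) = i"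
    using zer_hom K comp_zer[OF ih K] iZ by simp
  have "Ident C K = Zer C K K" using u 1 2 by blast
  then have "is_zero_obj C K" using id_zer_zero K by blast
  then show ?thesis using ih iE unfolding adm_monic_def by blast
qed

lemma zero_mono_not_iso:
  assumes K: "is_zero_obj C K" and i: "i \<in> hom C K A" and nA: "\<not> is_zero_obj C A"
  shows "\<not> is_iso C i"
proof
  assume "is_iso C i"
  then obtain g where g: "g \<in> hom C A K" "Comp C i g = Ident C A" using iso_homE i by metis
  have A: "A \<in> Obj C" using hom_objs i by blast
  have "i = Zer C K A" using zero_from_zer K i by blast
  then have "Ident C A = Zer C A A" using g zer_comp[OF g(1) A] by simp
  then show False using id_zer_zero A nA by blast
qed

lemma biprodD: "is_biproduct C A B Z i1 i2 p1 p2 \<Longrightarrow>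
     A \<in> Obj C \<and> B \<in> Obj C \<and> Z \<in> Obj C \<and>
     i1 \<in> hom C A Z \<and> i2 \<in> hom C B Z \<and> p1 \<in> hom C Z A \<and> p2 \<in> hom C Z B \<and>
     Comp C p1 i1 = Ident C A \<and> Comp C p2 i2 = Ident C B \<and>
     Comp C p2 i1 = Zer C A B \<and> Comp C p1 i2 = Zer C B A \<and>
     Add C (Comp C i1 p1) (Comp C i2 p2) = Ident C Z"
  unfolding is_biproduct_def by blast

lemma biprod_inj_not_iso:
  assumes bp: "is_biproduct C A B Z i1 i2 p1 p2" and nB: "\<not> is_zero_obj C B"
  shows "\<not> is_iso C i1"
proof
  assume "is_iso C i1"
  note b = biprodD[OF bp]
  then obtain h where h: "h \<in> hom C Z A" "Comp C i1 h = Ident C Z" using iso_homE \<open>is_iso C i1\<close> by metis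
  have "p2 = Comp C p2 (Ident C Z)" using id_r b by metis
  also have "\<dots> = Comp C (Comp C p2 i1) h" using h assoc[OF h(1)] b by metis
  also have "\<dots> = Zer C Z B" using b zer_comp[OF h(1)] by metis
  finally have "Ident C B = Comp C (Zer C Z B) i2" using b by metis
  also have "\<dots> = Zer C B B" using b zer_comp by metis
  finally show False using id_zer_zero b nB by metis
qed

end


context ec begin

lemma biprod_inj_adm:
  assumes bp: "is_biproduct C A B Z i1 i2 p1 p2"
  shows "adm_monic C E i1"
proof -
  note b = biprodD[OF bp]
  have A: "A \<in> Obj C" and B: "B \<in> Obj C" and Z: "Z \<in> Obj C" using b by auto
  have i1: "i1 \<in> hom C A Z" and i2: "i2 \<in> hom C B Z" and p1: "p1 \<in> hom C Z A" and p2: "p2 \<in> hom C Z B"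
    using b by auto
  obtain K i where K: "is_zero_obj C K" and i: "i \<in> hom C K B" and ia: "adm_monic C E i"
    using zero_mono[OF B] by blast
  have KO: "K \<in> Obj C" using zero_obj_Obj K by blast
  define f where "f = Zer C K A"
  have f: "f \<in> hom C K A" using zer_hom KO A f_def by simp
  obtain i' f' where po: "is_pushout C i f i' f'" and i'a: "adm_monic C E i'"
    using E2[OF ia] homD[OF f] homD[OF i] by force
  have cs: "comm_square C i f i' f'" using po unfolding is_pushout_def by blast
  define P where "P = Cod C i'"
  have i': "i' \<in> hom C A P" and f': "f' \<in> hom C B P" and comm: "Comp C f' i = Comp C i' f"
    using cs homD[OF f] homD[OF i] unfolding comm_square_def hom_def P_def by auto
  have P: "P \<in> Obj C" using hom_objs i' by blast
  have univ: "\<forall>u \<in> Arr C. \<forall>v \<in> Arr C. Dom C u = Cod C i \<longrightarrow> Dom C v = Cod C f \<longrightarrow>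
        Cod C u = Cod C v \<longrightarrow> Comp C u i = Comp C v f \<longrightarrow>
        (\<exists>!h. h \<in> hom C (Cod C i') (Cod C u) \<and> Comp C h f' = u \<and> Comp C h i' = v)"
    using po unfolding is_pushout_def by blast
  have "Comp C i2 i = Comp C i1 f"
    using zero_from_unique[OF K comp_hom[OF i i2] comp_hom[OF f i1]] .
  then have "\<exists>!h. h \<in> hom C (Cod C i') (Cod C i2) \<and> Comp C h f' = i2 \<and> Comp C h i' = i1"
    by (intro univ[rule_format]) (use homD[OF i1] homD[OF i2] homD[OF i] homD[OF f] in auto)
  then have "\<exists>!h. h \<in> hom C P Z \<and> Comp C h f' = i2 \<and> Comp C h i' = i1"
    using homD[OF i2] P_def by simp
  then obtain h where h: "h \<in> hom C P Z" "Comp C h f' = i2" "Comp C h i' = i1" by blast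
  define k where "k = Add C (Comp C i' p1) (Comp C f' p2)"
  have ip: "Comp C i' p1 \<in> hom C Z P" and fp: "Comp C f' p2 \<in> hom C Z P"
    using comp_hom p1 p2 i' f' by auto
  have k: "k \<in> hom C Z P" using add_hom ip fp k_def by simp
  have hk: "Comp C h k = Ident C Z"
  proof -
    have "Comp C h k = Add C (Comp C h (Comp C i' p1)) (Comp C h (Comp C f' p2))"
      using distl[OF ip fp h(1)] k_def by simp
    also have "\<dots> = Add C (Comp C (Comp C h i') p1) (Comp C (Comp C h f') p2)"
      using assoc[OF p1 i' h(1)] assoc[OF p2 f' h(1)] by simp
    also have "\<dots> = Ident C Z" using h b by simp
    finally show ?thesis .
  qed
  have ki2: "Comp C k i2 = f'"
  proof -
    have "Comp C k i2 = Add C (Comp C (Comp C i' p1) i2) (Comp C (Comp C f' p2) i2)"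
      using distr[OF i2 ip fp] k_def by simp
    also have "\<dots> = Add C (Comp C i' (Comp C p1 i2)) (Comp C f' (Comp C p2 i2))"
      using assoc[OF i2 p1 i'] assoc[OF i2 p2 f'] by simp
    also have "\<dots> = Add C (Zer C B P) f'"
      using b comp_zer[OF i' B] id_r[OF f'] by simp
    also have "\<dots> = f'" using zer_add f' by simp
    finally show ?thesis .
  qed
  have ki1: "Comp C k i1 = i'"
  proof -
    have "Comp C k i1 = Add C (Comp C (Comp C i' p1) i1) (Comp C (Comp C f' p2) i1)"
      using distr[OF i1 ip fp] k_def by simp
    also have "\<dots> = Add C (Comp C i' (Comp C p1 i1)) (Comp C f' (Comp C p2 i1))"
      using assoc[OF i1 p1 i'] assoc[OF i1 p2 f'] by simp
    also have "\<dots> = Add C i' (Zer C A P)"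
      using b comp_zer[OF f' A] id_r[OF i'] by simp
    also have "\<dots> = i'" using add_zer i' by simp
    finally show ?thesis .
  qed
  have kh: "Comp C k h = Ident C P"
  proof -
    have "\<exists>!x. x \<in> hom C (Cod C i') (Cod C f') \<and> Comp C x f' = f' \<and> Comp C x i' = i'"
      by (intro univ[rule_format]) (use comm homD[OF i'] homD[OF f'] homD[OF i] homD[OF f] in auto)
    then have u2: "\<exists>!x. x \<in> hom C P P \<and> Comp C x f' = f' \<and> Comp C x i' = i'"
      using homD[OF f'] P_def by simp
    have 1: "Ident C P \<in> hom C P P \<and> Comp C (Ident C P) f' = f' \<and> Comp C (Ident C P) i' = i'"
      using id_hom[OF P] id_l[OF f'] id_l[OF i'] by simp
    have 2: "Comp C k h \<in> hom C P P \<and> Comp C (Comp C k h) f' = f' \<and> Comp C (Comp C k h) i' = i'"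
      using comp_hom[OF h(1) k] assoc[OF f' h(1) k] assoc[OF i' h(1) k] h ki1 ki2 by simp
    show ?thesis using u2 1 2 by blast
  qed
  have "is_iso C h" using iso_intro[OF h(1) k kh hk] .
  then have "adm_monic C E h" using iso_adm_monic h(1) by blast
  then have "adm_monic C E (Comp C h i')" using E1 i'a homD[OF i'] homD[OF h(1)] by simp
  then show ?thesis using h by simp
qed

lemma proper_sub_iso:
  assumes ps: "proper_sub C E A B" and f: "f \<in> hom C B B'" and fi: "is_iso C f"
  shows "proper_sub C E A B'"
proof -
  obtain j where j: "j \<in> hom C A B" "adm_monic C E j" "\<not> is_iso C j"
    using ps unfolding proper_sub_def by blast
  have "adm_monic C E (Comp C f j)" using E1[OF j(2) iso_adm_monic[OF f fi]] homD[OF j(1)] homD[OF f] by simp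
  moreover have "Comp C f j \<in> hom C A B'" using comp_hom j(1) f by blast
  moreover have "\<not> is_iso C (Comp C f j)" using comp_not_iso[OF f fi j(1) j(3)] .
  ultimately show ?thesis unfolding proper_sub_def by blast
qed

lemma proper_subD: "proper_sub C E A B \<Longrightarrow> A \<in> Obj C \<and> B \<in> Obj C"
  unfolding proper_sub_def using hom_objs by blast

lemma decomp:
  assumes "Z \<in> Obj C" "\<not> is_zero_obj C Z" "\<not> indecomposable C Z"
  shows "\<exists>A B i1 i2 p1 p2. is_biproduct C A B Z i1 i2 p1 p2 \<and> \<not> is_zero_obj C A \<and> \<not> is_zero_obj C B"
  using assms unfolding indecomposable_def by blast

end


definition Lc :: "('o,'m) addcat \<Rightarrow> ('m \<times> 'm) set \<Rightarrow> 'o \<Rightarrow> nat" where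
  "Lc C E X = the_enat (E_length C E X)"

definition chain :: "('o,'m) addcat \<Rightarrow> ('m \<times> 'm) set \<Rightarrow> nat \<Rightarrow> (nat \<Rightarrow> 'o) \<Rightarrow> 'o \<Rightarrow> bool" where
  "chain C E n Xs X \<longleftrightarrow> is_zero_obj C (Xs 0) \<and> Xs n = X \<and>
      (\<forall>k < n. proper_sub C E (Xs k) (Xs (Suc k)))"

locale fec = ec +
  assumes fin: "finite_exact C E"
begin

abbreviation L where "L \<equiv> Lc C E"

lemma len_enat: "X \<in> Obj C \<Longrightarrow> E_length C E X = enat (L X)"
  using fin unfolding finite_exact_def Lc_def by auto

lemma len_upper: "chain C E n Xs X \<Longrightarrow> X \<in> Obj C \<Longrightarrow> n \<le> L X"
proof -
  assume c: "chain C E n Xs X" and X: "X \<in> Obj C"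
  have "enat n \<le> E_length C E X" unfolding E_length_def
    by (rule Sup_upper) (use c in \<open>auto simp: chain_def\<close>)
  then show ?thesis using len_enat[OF X] by simp
qed

lemma one_chain: assumes X: "X \<in> Obj C" and nz: "\<not> is_zero_obj C X"
  shows "\<exists>Xs. chain C E 1 Xs X"
proof -
  obtain K i where K: "is_zero_obj C K" "i \<in> hom C K X" "adm_monic C E i"
    using zero_mono[OF X] by blast
  have "proper_sub C E K X" unfolding proper_sub_def using K zero_mono_not_iso[OF K(1) K(2) nz] by blast
  then have "chain C E 1 (\<lambda>k. if k = 0 then K else X) X" unfolding chain_def using K by auto
  then show ?thesis by blast
qed

lemma len_attained: assumes X: "X \<in> Obj C" and nz: "\<not> is_zero_obj C X"
  shows "\<exists>Xs. chain C E (L X) Xs X"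
proof -
  define S where "S = {enat n | n. \<exists>Xs.
      is_zero_obj C (Xs 0) \<and> Xs n = X \<and>
      (\<forall>k < n. proper_sub C E (Xs k) (Xs (Suc k)))}"
  have Sne: "S \<noteq> {}" using one_chain[OF X nz] unfolding S_def chain_def by blast
  have "Sup S = enat (L X)" using len_enat[OF X] unfolding E_length_def S_def by simp
  then have "Sup S \<in> S"
    using Sne unfolding Sup_enat_def by (metis Max_in enat.distinct(1))
  then obtain n Xs where "enat n = enat (L X)" "chain C E n Xs X"
    using \<open>Sup S = enat (L X)\<close> unfolding S_def chain_def by auto
  then show ?thesis by auto
qed

lemma len_less: assumes ps: "proper_sub C E Y X" and nz: "\<not> is_zero_obj C Y"
  shows "L Y < L X"
proof -
  have Y: "Y \<in> Obj C" and X: "X \<in> Obj C" using proper_subD[OF ps] by auto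
  obtain Xs where c: "chain C E (L Y) Xs Y" using len_attained[OF Y nz] by blast
  have "chain C E (Suc (L Y)) (Xs(Suc (L Y) := X)) X"
    using c ps unfolding chain_def by (auto simp: less_Suc_eq)
  then show ?thesis using len_upper X by fastforce
qed

lemma len_iso: assumes f: "f \<in> hom C B B'" and fi: "is_iso C f" and nz: "\<not> is_zero_obj C B"
  shows "L B \<le> L B'"
proof -
  have B: "B \<in> Obj C" and B': "B' \<in> Obj C" using hom_objs f by auto
  obtain Xs where c: "chain C E (L B) Xs B" using len_attained[OF B nz] by blast
  have "L B \<noteq> 0"
  proof
    assume "L B = 0"
    then have "Xs 0 = B" using c unfolding chain_def by simp
    then show False using c nz unfolding chain_def by simp
  qed
  then obtain m where m: "L B = Suc m" by (cases "L B") auto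
  have "proper_sub C E (Xs m) B" using c m unfolding chain_def by auto
  then have ps: "proper_sub C E (Xs m) B'" using proper_sub_iso f fi by blast
  have "chain C E (Suc m) (Xs(Suc m := B')) B'"
    using c ps m unfolding chain_def by (auto simp: less_Suc_eq)
  then show ?thesis using len_upper[OF _ B'] m by fastforce
qed

lemma sub_indec:
  "Z \<in> Obj C \<Longrightarrow> \<not> is_zero_obj C Z \<Longrightarrow>
   \<exists>W w. indecomposable C W \<and> w \<in> hom C W Z \<and> adm_monic C E w \<and> L W \<le> L Z"
proof (induction "L Z" arbitrary: Z rule: less_induct)
  case less
  show ?case
  proof (cases "indecomposable C Z")
    case True
    then show ?thesis using id_hom[OF less.prems(1)] E0[OF less.prems(1)] by blast
  next
    case False
    obtain A B i1 i2 p1 p2 where bp: "is_biproduct C A B Z i1 i2 p1 p2"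
      and nA: "\<not> is_zero_obj C A" and nB: "\<not> is_zero_obj C B"
      using decomp[OF less.prems False] by blast
    note b = biprodD[OF bp]
    have ps: "proper_sub C E A Z" unfolding proper_sub_def
      using b biprod_inj_adm[OF bp] biprod_inj_not_iso[OF bp nB] by blast
    have lt: "L A < L Z" using len_less[OF ps nA] .
    obtain W w where W: "indecomposable C W" "w \<in> hom C W A" "adm_monic C E w" "L W \<le> L A"
      using less.hyps[OF lt] b nA by blast
    have "adm_monic C E (Comp C i1 w)"
      using E1[OF W(3) biprod_inj_adm[OF bp]] homD[OF W(2)] b homD by metis
    moreover have "Comp C i1 w \<in> hom C W Z" using comp_hom W(2) b by blast
    ultimately show ?thesis using W lt by (meson less_imp_le_nat order.trans)
  qed
qed

end


lemma fin_sorted: "finite {ys :: nat list. sorted_wrt (<) ys \<and> set ys \<subseteq> {0..N}}"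
proof (rule finite_subset[OF _ finite_lists_length_le[of "{0..N}" "Suc N"]])
  show "{ys :: nat list. sorted_wrt (<) ys \<and> set ys \<subseteq> {0..N}} \<subseteq> {xs. set xs \<subseteq> {0..N} \<and> length xs \<le> Suc N}"
  proof clarify
    fix ys :: "nat list" assume a: "sorted_wrt (<) ys" "set ys \<subseteq> {0..N}"
    then have "distinct ys" using strict_sorted_iff by blast
    then have "length ys = card (set ys)" by (simp add: distinct_card)
    also have "\<dots> \<le> card {0..N}" using a(2) by (intro card_mono) auto
    finally show "length ys \<le> Suc N" by simp
  qed
qed simp

context fec begin

definition Sq where "Sq X = {map L xs | xs. indec_chain C E xs X}"
definition Pm where "Pm X = {mu_E C E Y' | Y'. indecomposable C Y' \<and> proper_sub C E Y' X}"

lemma mu_def': "mu_E C E X = seq_max (Sq X)"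
  unfolding mu_E_def Sq_def Lc_def by simp

lemma indec_nz: "indecomposable C X \<Longrightarrow> \<not> is_zero_obj C X \<and> X \<in> Obj C"
  unfolding indecomposable_def by blast

lemma chain_sorted: assumes c: "indec_chain C E xs X" shows "sorted_wrt (<) (map L xs)"
proof -
  have "\<forall>i. Suc i < length (map L xs) \<longrightarrow> (map L xs)!i < (map L xs)!(Suc i)"
  proof (intro allI impI)
    fix i assume i: "Suc i < length (map L xs)"
    then have "proper_sub C E (xs!i) (xs!Suc i)" using c unfolding indec_chain_def by simp
    moreover have "indecomposable C (xs!i)" using c i unfolding indec_chain_def by simp
    ultimately show "(map L xs)!i < (map L xs)!(Suc i)" using len_less indec_nz i by simp
  qed
  moreover have tr: "transp ((<)::nat\<Rightarrow>nat\<Rightarrow>bool)" by (auto simp: transp_def)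
  ultimately show ?thesis using sorted_wrt_iff_nth_Suc_transp[OF tr, of "map L xs"] by simp
qed

lemma chain_last: "indec_chain C E xs X \<Longrightarrow> map L xs \<noteq> [] \<and> last (map L xs) = L X"
  unfolding indec_chain_def by (simp add: last_map)

lemma sorted_last_bound: "sorted_wrt (<) (ys::nat list) \<Longrightarrow> ys \<noteq> [] \<Longrightarrow> \<forall>x\<in>set ys. x \<le> last ys"
proof (induction ys)
  case (Cons a ys)
  show ?case
  proof (cases "ys = []")
    case True then show ?thesis by simp
  next
    case False
    have ih: "\<forall>x\<in>set ys. x \<le> last ys" using Cons False by simp
    have "a < last ys" using Cons.prems(1) False by simp
    then show ?thesis using ih False by auto
  qed
qed simp

lemma Sq_elem: assumes "s \<in> Sq X" shows "sorted_wrt (<) s \<and> s \<noteq> [] \<and> last s = L X \<and> (\<forall>x\<in>set s. x \<le> L X)"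
proof -
  obtain xs where "indec_chain C E xs X" "s = map L xs" using assms unfolding Sq_def by blast
  then show ?thesis using chain_sorted[of xs X] chain_last[of xs X] sorted_last_bound[of s] by auto
qed

lemma chain_single: assumes c: "indec_chain C E xs X" and l: "\<not> 2 \<le> length xs" shows "xs = [X]"
proof -
  obtain a list where xs: "xs = a # list" using c unfolding indec_chain_def by (cases xs) auto
  then have "list = []" using l by (cases list) auto
  then show ?thesis using xs c unfolding indec_chain_def by simp
qed

lemma Sq_finite: "finite (Sq X)"
  by (rule finite_subset[OF _ fin_sorted[of "L X"]]) (use Sq_elem in fastforce)

lemma Sq_ne: "indecomposable C X \<Longrightarrow> [L X] \<in> Sq X"
  unfolding Sq_def indec_chain_def by force

lemma mu_prop: "indecomposable C X \<Longrightarrow> mu_E C E X \<in> Sq X \<and> (\<forall>s\<in>Sq X. seq_le s (mu_E C E X))"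
  unfolding mu_def' using seq_max_prop Sq_finite Sq_ne by blast

lemma mu_elem: "indecomposable C X \<Longrightarrow> sorted_wrt (<) (mu_E C E X) \<and> mu_E C E X \<noteq> [] \<and>
    last (mu_E C E X) = L X \<and> (\<forall>x\<in>set (mu_E C E X). x \<le> L X)"
  using mu_prop Sq_elem by blast

lemma indec_chain_snoc:
  assumes c: "indec_chain C E c Y" and ps: "proper_sub C E Y X" and X: "indecomposable C X"
  shows "indec_chain C E (c @ [X]) X"
  unfolding indec_chain_def
proof (intro conjI allI impI)
  show "c @ [X] \<noteq> []" "last (c @ [X]) = X" by auto
  show "\<forall>x\<in>set (c @ [X]). indecomposable C x" using c X unfolding indec_chain_def by auto
  fix k assume k: "Suc k < length (c @ [X])"
  show "proper_sub C E ((c @ [X]) ! k) ((c @ [X]) ! Suc k)"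
  proof (cases "Suc k < length c")
    case True then show ?thesis using c unfolding indec_chain_def by (simp add: nth_append)
  next
    case False
    then have kk: "Suc k = length c" using k by simp
    have "c ! k = Y" using c kk unfolding indec_chain_def by (metis diff_Suc_1 last_conv_nth)
    then show ?thesis using kk ps by (simp add: nth_append)
  qed
qed

lemma indec_chain_butlast:
  assumes c: "indec_chain C E xs X" and l: "2 \<le> length xs"
  shows "indec_chain C E (butlast xs) (last (butlast xs)) \<and> proper_sub C E (last (butlast xs)) X
     \<and> xs = butlast xs @ [X] \<and> indecomposable C (last (butlast xs))"
proof -
  have ne: "butlast xs \<noteq> []" using l by (cases xs) auto
  have eq: "xs = butlast xs @ [X]" using c unfolding indec_chain_def by (metis append_butlast_last_id)
  have ch: "indec_chain C E (butlast xs) (last (butlast xs))"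
    unfolding indec_chain_def
  proof (intro conjI allI impI)
    show "butlast xs \<noteq> []" "last (butlast xs) = last (butlast xs)" using ne by auto
    show "\<forall>x\<in>set (butlast xs). indecomposable C x" using c in_set_butlastD unfolding indec_chain_def by metis
    fix k assume "Suc k < length (butlast xs)"
    then show "proper_sub C E (butlast xs ! k) (butlast xs ! Suc k)"
      using c unfolding indec_chain_def by (simp add: nth_butlast)
  qed
  have "proper_sub C E (xs ! (length xs - 2)) (xs ! Suc (length xs - 2))"
    using c l unfolding indec_chain_def by simp
  moreover have "xs ! (length xs - 2) = last (butlast xs)"
    using ne l by (simp add: last_conv_nth nth_butlast numeral_2_eq_2)
  moreover have "xs ! Suc (length xs - 2) = X"
  proof -
    have "Suc (length xs - 2) = length xs - 1" using l by simp
    moreover have "xs ! (length xs - 1) = last xs" using ne by (simp add: last_conv_nth butlast_conv_take)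
    ultimately show ?thesis using c unfolding indec_chain_def by simp
  qed
  moreover have "indecomposable C (last (butlast xs))"
    using ch unfolding indec_chain_def by simp
  ultimately show ?thesis using ch eq by simp
qed

lemma Pm_finite: "finite (Pm X)"
proof (rule finite_subset[OF _ fin_sorted[of "L X"]])
  show "Pm X \<subseteq> {ys. sorted_wrt (<) ys \<and> set ys \<subseteq> {0..L X}}"
  proof
    fix p assume "p \<in> Pm X"
    then obtain Y where Y: "indecomposable C Y" "proper_sub C E Y X" "p = mu_E C E Y"
      unfolding Pm_def by blast
    have "L Y < L X" using len_less Y indec_nz by blast
    then show "p \<in> {ys. sorted_wrt (<) ys \<and> set ys \<subseteq> {0..L X}}"
      using mu_elem[OF Y(1)] Y(3) by fastforce
  qed
qed

lemma Pm_elem: "p \<in> Pm X \<Longrightarrow> sorted_wrt (<) p \<and> p \<noteq> [] \<and> (\<forall>x\<in>set p. x < L X)"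
proof -
  assume "p \<in> Pm X"
  then obtain Y where Y: "indecomposable C Y" "proper_sub C E Y X" "p = mu_E C E Y"
    unfolding Pm_def by blast
  have "L Y < L X" using len_less Y indec_nz by blast
  then show ?thesis using mu_elem[OF Y(1)] Y(3) by fastforce
qed

lemma mu_rec_empty:
  assumes X: "indecomposable C X" and P: "Pm X = {}"
  shows "mu_E C E X = [L X]"
proof -
  have "\<forall>s\<in>Sq X. s = [L X]"
  proof
    fix s assume "s \<in> Sq X"
    then obtain xs where xs: "indec_chain C E xs X" "s = map L xs" unfolding Sq_def by blast
    show "s = [L X]"
    proof (cases "2 \<le> length xs")
      case True
      note b = indec_chain_butlast[OF xs(1) True]
      then have "mu_E C E (last (butlast xs)) \<in> Pm X" unfolding Pm_def by blast
      then show ?thesis using P by simp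
    next
      case False
      then have "xs = [X]" using chain_single xs(1) by blast
      then show ?thesis using xs by simp
    qed
  qed
  then show ?thesis unfolding mu_def' using seq_max_eq Sq_ne[OF X] by (metis seq_le_refl)
qed

lemma mu_rec:
  assumes X: "indecomposable C X" and P: "Pm X \<noteq> {}"
  shows "mu_E C E X = seq_max (Pm X) @ [L X]"
proof -
  define M where "M = seq_max (Pm X)"
  have M: "M \<in> Pm X" "\<forall>p\<in>Pm X. seq_le p M" using seq_max_prop[OF Pm_finite P] M_def by auto
  have Me: "M \<noteq> [] \<and> (\<forall>x\<in>set M. x < L X)" using Pm_elem M(1) by blast
  obtain Y where Y: "indecomposable C Y" "proper_sub C E Y X" "M = mu_E C E Y"
    using M(1) unfolding Pm_def by blast
  obtain c where c: "indec_chain C E c Y" "mu_E C E Y = map L c"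
    using mu_prop[OF Y(1)] unfolding Sq_def by blast
  have "indec_chain C E (c @ [X]) X" using indec_chain_snoc[OF c(1) Y(2) X] .
  moreover have "M @ [L X] = map L (c @ [X])" using c Y(3) by simp
  ultimately have mem: "M @ [L X] \<in> Sq X" unfolding Sq_def by blast
  have "\<forall>s\<in>Sq X. seq_le s (M @ [L X])"
  proof
    fix s assume "s \<in> Sq X"
    then obtain xs where xs: "indec_chain C E xs X" "s = map L xs" unfolding Sq_def by blast
    show "seq_le s (M @ [L X])"
    proof (cases "2 \<le> length xs")
      case True
      note b = indec_chain_butlast[OF xs(1) True]
      define Y' where "Y' = last (butlast xs)"
      have "map L (butlast xs) \<in> Sq Y'" using b Y'_def unfolding Sq_def by blast
      then have "seq_le (map L (butlast xs)) (mu_E C E Y')" using mu_prop b Y'_def by blast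
      moreover have "mu_E C E Y' \<in> Pm X" using b Y'_def unfolding Pm_def by blast
      ultimately have "seq_le (map L (butlast xs)) M" using M(2) seq_le_trans by blast
      then have "seq_le (map L (butlast xs) @ [L X]) (M @ [L X])" using seq_le_snoc Me by blast
      moreover have "s = map L (butlast xs) @ [L X]" using xs(2) b by (metis map_append list.map)
      ultimately show ?thesis by simp
    next
      case False
      then have "xs = [X]" using chain_single xs(1) by blast
      then show ?thesis using xs seq_le_single Me by simp
    qed
  qed
  then show ?thesis using seq_max_eq[OF mem] M_def mu_def' by simp
qed

end


context fec begin

lemma inverse_iso: assumes f: "f \<in> hom C Y S" "is_iso C f"
  obtains g where "g \<in> hom C S Y" "is_iso C g"
proof -
  obtain g where g: "g \<in> hom C S Y" "Comp C g f = Ident C Y" "Comp C f g = Ident C S"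
    using iso_homE[OF f(2) f(1)] by blast
  have "is_iso C g" using iso_intro[OF g(1) f(1) g(3) g(2)] .
  then show ?thesis using that g(1) by blast
qed

lemma simple_no_sub: assumes s: "E_simple C E S" and S: "indecomposable C S" shows "Pm S = {}"
proof (rule ccontr)
  assume "Pm S \<noteq> {}"
  then obtain Y where Y: "indecomposable C Y" "proper_sub C E Y S" unfolding Pm_def by blast
  obtain j where j: "j \<in> hom C Y S" "adm_monic C E j" using Y(2) unfolding proper_sub_def by blast
  have "is_zero_obj C Y \<or> iso_objs C Y S" using s indec_nz[OF Y(1)] j unfolding E_simple_def by blast
  then obtain f where f: "f \<in> hom C Y S" "is_iso C f" using indec_nz[OF Y(1)] unfolding iso_objs_def by blast
  obtain g where g: "g \<in> hom C S Y" "is_iso C g" using inverse_iso[OF f] by blast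
  have "L S \<le> L Y" using len_iso[OF g] indec_nz[OF S] by blast
  moreover have "L Y < L S" using len_less[OF Y(2)] indec_nz[OF Y(1)] by blast
  ultimately show False by simp
qed

lemma no_sub_simple: assumes S: "indecomposable C S" and P: "Pm S = {}" shows "E_simple C E S"
  unfolding E_simple_def
proof (intro conjI ballI impI)
  show "S \<in> Obj C" "\<not> is_zero_obj C S" using indec_nz[OF S] by auto
  fix Z assume Z: "Z \<in> Obj C" and "\<exists>i\<in>hom C Z S. adm_monic C E i"
  then obtain i where i: "i \<in> hom C Z S" "adm_monic C E i" by blast
  show "is_zero_obj C Z \<or> iso_objs C Z S"
  proof (rule ccontr)
    assume a: "\<not> (is_zero_obj C Z \<or> iso_objs C Z S)"
    then have ni: "\<not> is_iso C i" using i unfolding iso_objs_def by blast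
    then have ps: "proper_sub C E Z S" using i unfolding proper_sub_def by blast
    obtain W w where W: "indecomposable C W" "w \<in> hom C W Z" "adm_monic C E w" "L W \<le> L Z"
      using sub_indec[OF Z] a by blast
    have ja: "adm_monic C E (Comp C i w)" using E1[OF W(3) i(2)] homD[OF W(2)] homD[OF i(1)] by simp
    have jh: "Comp C i w \<in> hom C W S" using comp_hom W(2) i(1) by blast
    have "\<not> is_iso C (Comp C i w)"
    proof
      assume "is_iso C (Comp C i w)"
      then obtain g where g: "g \<in> hom C S W" "is_iso C g" using inverse_iso jh by blast
      have "L S \<le> L W" using len_iso[OF g] indec_nz[OF S] by blast
      moreover have "L Z < L S" using len_less[OF ps] a by blast
      ultimately show False using W(4) by simp
    qed
    then have "proper_sub C E W S" using ja jh unfolding proper_sub_def by blast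
    then have "mu_E C E W \<in> Pm S" using W(1) unfolding Pm_def by blast
    then show False using P by simp
  qed
qed

lemma GR_to_mu:
  assumes c: "indec_chain C E xs X" and gr: "GR_filtration C E xs X"
  shows "i < length xs \<Longrightarrow> mu_E C E (xs ! i) = map L (take (Suc i) xs)"
proof (induction i)
  case 0
  have S: "indecomposable C (xs ! 0)" using c 0 unfolding indec_chain_def by simp
  have "E_simple C E (xs ! 0)" using gr unfolding GR_filtration_def by blast
  then have "Pm (xs ! 0) = {}" using simple_no_sub S by blast
  then have "mu_E C E (xs ! 0) = [L (xs ! 0)]" using mu_rec_empty S by blast
  moreover have "take (Suc 0) xs = [xs ! 0]" using 0 by (cases xs) auto
  ultimately show ?case by simp
next
  case (Suc j)
  have p: "GR_predecessor C E (xs ! j) (xs ! Suc j)"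
  proof -
    have "\<forall>i. 1 \<le> i \<longrightarrow> i < length xs \<longrightarrow> GR_predecessor C E (xs ! (i - 1)) (xs ! i)"
      using gr unfolding GR_filtration_def by blast
    from this[rule_format, of "Suc j"] Suc.prems show ?thesis by simp
  qed
  then have e: "mu_E C E (xs ! j) = seq_max (Pm (xs ! Suc j))" "indecomposable C (xs ! j)"
     "indecomposable C (xs ! Suc j)" "proper_sub C E (xs ! j) (xs ! Suc j)"
    unfolding GR_predecessor_def Pm_def by blast+
  have "mu_E C E (xs ! j) \<in> Pm (xs ! Suc j)" using e unfolding Pm_def by blast
  then have "mu_E C E (xs ! Suc j) = mu_E C E (xs ! j) @ [L (xs ! Suc j)]"
    using mu_rec[OF e(3)] e(1) by auto
  also have "\<dots> = map L (take (Suc j) xs) @ [L (xs ! Suc j)]" using Suc by simp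
  also have "\<dots> = map L (take (Suc (Suc j)) xs)" using Suc.prems by (simp add: take_Suc_conv_app_nth)
  finally show ?case .
qed

lemma main:
  assumes X: "indecomposable C X" and c: "indec_chain C E xs X"
  shows "GR_filtration C E xs X \<longleftrightarrow> mu_filtration C E xs X"
proof
  assume gr: "GR_filtration C E xs X"
  define n where "n = length xs"
  have n: "n \<noteq> 0" using c unfolding indec_chain_def n_def by simp
  have "xs \<noteq> []" "last xs = X" using c unfolding indec_chain_def by auto
  then have Xn: "xs ! (n - 1) = X" unfolding n_def by (metis last_conv_nth)
  have "mu_E C E X = map L xs" using GR_to_mu[OF c gr, of "n - 1"] n Xn n_def by simp
  then show "mu_filtration C E xs X"
    unfolding mu_filtration_def using c GR_to_mu[OF c gr] by (simp add: take_map)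
next
  assume mf: "mu_filtration C E xs X"
  define n where "n = length xs"
  define m where "m = mu_E C E X"
  have mi: "\<And>i. i < n \<Longrightarrow> mu_E C E (xs ! i) = take (Suc i) m"
    using mf unfolding mu_filtration_def m_def n_def by blast
  have ind: "\<And>i. i < n \<Longrightarrow> indecomposable C (xs ! i)"
    using c unfolding indec_chain_def n_def by simp
  have mne: "m \<noteq> []" using mu_elem[OF X] m_def by simp
  have n0: "n \<noteq> 0" using c unfolding indec_chain_def n_def by simp
  have len: "n \<le> length m"
  proof (rule ccontr)
    assume "\<not> n \<le> length m"
    then have lt: "length m < n" by simp
    define k where "k = length m"
    have k0: "k \<noteq> 0" using mne k_def by simp
    have a: "mu_E C E (xs ! (k - 1)) = m" using mi[of "k - 1"] lt k0 k_def by simp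
    have b: "mu_E C E (xs ! (n - 1)) = m" using mi[of "n - 1"] lt n0 by simp
    have "L (xs ! (k - 1)) = L (xs ! (n - 1))"
      using mu_elem[OF ind[of "k - 1"]] mu_elem[OF ind[of "n - 1"]] a b lt k0 k_def n0 by simp
    moreover have "(map L xs) ! (k - 1) < (map L xs) ! (n - 1)"
    proof -
      have kn: "k - 1 < n - 1" using lt k0 k_def by linarith
      have "n - 1 < length (map L xs)" using n0 n_def by simp
      then show ?thesis using sorted_wrt_nth_less[OF chain_sorted[OF c] kn] by blast
    qed
    ultimately show False using lt k0 k_def n0 n_def by simp
  qed
  have simple: "E_simple C E (xs ! 0)"
  proof (rule no_sub_simple[OF ind])
    show "0 < n" using n0 by simp
    show "Pm (xs ! 0) = {}"
    proof (rule ccontr)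
      assume P: "Pm (xs ! 0) \<noteq> {}"
      have "mu_E C E (xs ! 0) = seq_max (Pm (xs ! 0)) @ [L (xs ! 0)]"
        using mu_rec[OF ind P] n0 by simp
      moreover have "seq_max (Pm (xs ! 0)) \<noteq> []"
        using seq_max_prop[OF Pm_finite P] Pm_elem by blast
      moreover have "length (mu_E C E (xs ! 0)) = 1" using mi[of 0] n0 mne by (cases m) auto
      ultimately show False by simp
    qed
  qed
  have pred: "\<And>i. 1 \<le> i \<Longrightarrow> i < n \<Longrightarrow> GR_predecessor C E (xs ! (i - 1)) (xs ! i)"
  proof -
    fix i assume i: "1 \<le> i" "i < n"
    then obtain j where j: "i = Suc j" by (cases i) auto
    have ps: "proper_sub C E (xs ! j) (xs ! Suc j)" using c i j unfolding indec_chain_def n_def by simp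
    have ij: "indecomposable C (xs ! j)" "indecomposable C (xs ! Suc j)" using ind i j by auto
    have mem: "mu_E C E (xs ! j) \<in> Pm (xs ! Suc j)" using ps ij unfolding Pm_def by blast
    then have "mu_E C E (xs ! Suc j) = seq_max (Pm (xs ! Suc j)) @ [L (xs ! Suc j)]"
      using mu_rec[OF ij(2)] by auto
    moreover have "mu_E C E (xs ! Suc j) = take (Suc j) m @ [m ! Suc j]"
      using mi[of "Suc j"] i j len by (simp add: take_Suc_conv_app_nth)
    ultimately have "seq_max (Pm (xs ! Suc j)) = take (Suc j) m" by simp
    also have "\<dots> = mu_E C E (xs ! j)" using mi[of j] i j by simp
    finally show "GR_predecessor C E (xs ! (i - 1)) (xs ! i)"
      unfolding GR_predecessor_def Pm_def using ij ps j by simp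
  qed
  have "\<forall>i. 1 \<le> i \<longrightarrow> i < length xs \<longrightarrow> GR_predecessor C E (xs ! (i - 1)) (xs ! i)"
    using pred n_def by simp
  then show "GR_filtration C E xs X"
    unfolding GR_filtration_def using c simple by (intro conjI)
qed

end

theorem proposition7p11:
  fixes C :: "('o, 'm) addcat" and E :: "('m \<times> 'm) set"
    and X :: 'o and xs :: "'o list"
  assumes "exact_category C E"
    and "finite_exact C E"
    and "indecomposable C X"
    and "indec_chain C E xs X"
  shows "GR_filtration C E xs X \<longleftrightarrow> mu_filtration C E xs X"
proof -
  have f: "fec C E" unfolding fec_def fec_axioms_def ec_def using assms(1,2) by (intro conjI)
  show ?thesis by (rule fec.main[OF f assms(3) assms(4)])
qed


end
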